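(* Let $T$ be a Boolean algebra (with order $\le$, meet $\land$, join $\lor$ and complement $\neg$), and let $(a,g)$ and $(a',g')$ be contracts over $T$. Let $\mathcal{C}_q=(a_q,g_q)$ be the quotient $(a,g)/(a',g')$, given by $$a_q=a\land(\neg a'\lor g'),\qquad g_q=(a'\land g)\lor\neg a\lor(a'\land\neg g').$$ Suppose that $a''\in T$ satisfies $a_q\le a''$, and that $g'',g'''\in T$ satisfy $a'\land g'\land g''\le a'\land g'\land g$ and $g'''\land a\le a'\land g''\land a$. Then the contract $(a'',g''')$ is a refinement of $\mathcal{C}_q$, i.e. $(a'',g''')\le\mathcal{C}_q$.
   Context: A contract over a Boolean algebra $T$ (the "term algebra") is a pair $(a,g)$ of elements of $T$, called assumptions and guarantees. Contracts are ordered by refinement: for contracts $\mathcal{C}=(a,g)$ and $\mathcal{C}'=(a',g')$, $\mathcal{C}\le\mathcal{C}'$ (read "$\mathcal{C}$ is a refinement of $\mathcal{C}'$") holds iff $a'\le a$ and $g\lor\neg a\le g'\lor\neg a'$. *)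

theory Defs
  imports Main
begin

text \<open>Contracts over a Boolean algebra: pairs (assumption, guarantee).
Refinement: (a,g) \<le> (a',g') iff a' \<le> a and g \<squnion> -a \<le> g' \<squnion> -a'.\<close>

definition contract_refines :: "'a::boolean_algebra \<times> 'a \<Rightarrow> 'a \<times> 'a \<Rightarrow> bool" where
  "contract_refines C C' \<longleftrightarrow>
     fst C' \<le> fst C \<and> sup (snd C) (- fst C) \<le> sup (snd C') (- fst C')"

definition contract_quotient :: "'a::boolean_algebra \<times> 'a \<Rightarrow> 'a \<times> 'a \<Rightarrow> 'a \<times> 'a" where
  "contract_quotient C C' =
     (let a = fst C; g = snd C; a' = fst C'; g' = snd C' in
      (inf a (sup (- a') g'),
       sup (sup (inf a' g) (- a)) (inf a' (- g'))))"

end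

theory Submission
  imports Defs
begin

theorem theorem2:
  fixes a g a' g' a'' g'' g''' :: "'a::boolean_algebra"
  assumes "fst (contract_quotient (a, g) (a', g')) \<le> a''"
    and "inf (inf a' g') g'' \<le> inf (inf a' g') g"
    and "inf g''' a \<le> inf (inf a' g'') a"
  shows "contract_refines (a'', g''') (contract_quotient (a, g) (a', g'))"
proof -
  let ?aq = "inf a (sup (- a') g')"
  let ?gq = "sup (sup (inf a' g) (- a)) (inf a' (- g'))"
  have A: "?aq \<le> a''" using assms(1) by (simp add: contract_quotient_def Let_def)
  have na: "- a'' \<le> - ?aq" using A by (simp only: compl_mono)
  have s1: "g''' \<le> sup (inf g''' a) (- a)"
    by (metis inf_sup_distrib1 inf_top_right le_inf_iff order_refl sup_compl_top sup_ge1 sup_inf_distrib2)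
  have s2: "inf g''' a \<le> inf a' g''" using assms(3) by simp
  have s3: "inf a' g'' \<le> sup (inf (inf a' g') g'') (inf a' (- g'))"
  proof -
    have "inf a' g'' = inf (inf a' g'') (sup g' (- g'))" by simp
    also have "\<dots> = sup (inf (inf a' g') g'') (inf (inf a' g'') (- g'))"
      by (simp only: inf_sup_distrib1 inf_aci)
    also have "\<dots> \<le> sup (inf (inf a' g') g'') (inf a' (- g'))"
      by (meson inf_le1 inf_mono order_refl sup_mono)
    finally show ?thesis .
  qed
  have s4: "inf (inf a' g') g'' \<le> inf a' g" using assms(2) by (meson le_inf_iff)
  have "g''' \<le> ?gq"
  proof -
    have "inf g''' a \<le> sup (inf a' g) (inf a' (- g'))"
      using s2 s3 s4 by (meson order_trans sup_mono order_refl)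
    then show ?thesis using s1
      by (smt (verit) le_sup_iff order_trans sup_ge1 sup_ge2 sup_assoc sup_commute)
  qed
  hence "sup g''' (- a'') \<le> sup ?gq (- ?aq)" using na by (meson sup_mono)
  thus ?thesis using A by (simp add: contract_refines_def contract_quotient_def Let_def)
qed

end
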